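(* Let $k\ge 2$ be an integer and let $d_1\ge d_2\ge\cdots\ge d_k\ge 2$ be integers. If $r\le d_1+k-2$, then for all sufficiently large $n$, $$ex\Big(n,K_r,\bigcup_{i=1}^k S_{d_i}\Big)\le \max\left\{\max_{1\le i\le k}\left\{\Big(\binom{d_i+i-1}{r}-\binom{i-1}{r}\Big)\Big\lceil\frac{n-i+1}{d_i}\Big\rceil+\binom{i-1}{r},\ \frac{d_i-1}{r-i+1}(n-i+1)\right\},\ \max_{1\le c<k-1}\left\{\frac{\max\big\{\binom{d_c+c}{r-1},\,d_c+c\big\}}{r-c}(n-c)\right\}\right\}.$$
   Context: $S_\ell$ denotes the star $K_{1,\ell}$ with $\ell$ edges, and $\bigcup_{i=1}^k S_{d_i}$ denotes the star forest that is the vertex-disjoint union of $S_{d_1},\dots,S_{d_k}$. For graphs $H$ and $F$, the generalized Turán number $ex(n,H,F)$ is the maximum number of copies of $H$ in an $n$-vertex graph containing no copy of $F$ as a subgraph; $K_r$ is the complete graph on $r$ vertices. Binomial coefficients $\binom{a}{b}$ with $a<b$ are $0$. *)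

theory Defs
  imports Complex_Main
begin

definition simple_graph :: "'a set \<Rightarrow> 'a set set \<Rightarrow> bool" where
  "simple_graph V E \<longleftrightarrow> (\<forall>e\<in>E. e \<subseteq> V \<and> card e = 2)"

definition subgraph_copy :: "'b set \<Rightarrow> 'b set set \<Rightarrow> 'a set \<Rightarrow> 'a set set \<Rightarrow> bool" where
  "subgraph_copy VH EH VG EG \<longleftrightarrow>
     (\<exists>f. inj_on f VH \<and> f ` VH \<subseteq> VG \<and> (\<forall>e\<in>EH. f ` e \<in> EG))"

definition count_Kr :: "nat \<Rightarrow> 'a set \<Rightarrow> 'a set set \<Rightarrow> nat" where
  "count_Kr r V E = card {S. S \<subseteq> V \<and> card S = r \<and> (\<forall>x\<in>S. \<forall>y\<in>S. x \<noteq> y \<longrightarrow> {x, y} \<in> E)}"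

(* star forest S_{d 1} \<union> ... \<union> S_{d k}: star i has centre (i,0) and leaves (i,j), 1 \<le> j \<le> d i *)
definition star_forest_V :: "nat \<Rightarrow> (nat \<Rightarrow> nat) \<Rightarrow> (nat \<times> nat) set" where
  "star_forest_V k d = {(i, j). 1 \<le> i \<and> i \<le> k \<and> j \<le> d i}"

definition star_forest_E :: "nat \<Rightarrow> (nat \<Rightarrow> nat) \<Rightarrow> (nat \<times> nat) set set" where
  "star_forest_E k d = {{(i, 0), (i, j)} | i j. 1 \<le> i \<and> i \<le> k \<and> 1 \<le> j \<and> j \<le> d i}"

definition ex_Kr :: "nat \<Rightarrow> nat \<Rightarrow> 'b set \<Rightarrow> 'b set set \<Rightarrow> nat" where
  "ex_Kr n r VF EF = Max {count_Kr r {0..<n} E | E.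
      simple_graph {0..<n::nat} E \<and> \<not> subgraph_copy VF EF {0..<n} E}"

definition cor62_bound :: "nat \<Rightarrow> (nat \<Rightarrow> nat) \<Rightarrow> nat \<Rightarrow> nat \<Rightarrow> real" where
  "cor62_bound k d r n = Max (
     (\<lambda>i. (real ((d i + i - 1) choose r) - real ((i - 1) choose r))
            * of_int \<lceil>(real n - real i + 1) / real (d i)\<rceil> + real ((i - 1) choose r)) ` {1..k}
     \<union> (\<lambda>i. (real (d i) - 1) / (real r - real i + 1) * (real n - real i + 1)) ` {1..k}
     \<union> (\<lambda>c. real (max ((d c + c) choose (r - 1)) (d c + c)) / (real r - real c) * (real n - real c))
            ` {1..<k - 1})"

end

theory Submission
  imports Defs
begin


definition nbr :: "nat set set \<Rightarrow> nat \<Rightarrow> nat set" where "nbr E v = {u. {v,u} \<in> E}"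

definition packing :: "nat set \<Rightarrow> nat set set \<Rightarrow> (nat \<Rightarrow> nat) \<Rightarrow> nat set \<Rightarrow> (nat \<Rightarrow> nat) \<Rightarrow> (nat \<Rightarrow> nat set) \<Rightarrow> bool" where
 "packing V E d I c L \<longleftrightarrow> (\<forall>i\<in>I. c i \<in> V \<and> L i \<subseteq> V \<and> c i \<notin> L i \<and> finite (L i) \<and> card (L i) = d i \<and> (\<forall>x\<in>L i. {c i, x} \<in> E))
    \<and> (\<forall>i\<in>I. \<forall>i'\<in>I. i \<noteq> i' \<longrightarrow> insert (c i) (L i) \<inter> insert (c i') (L i') = {})"

definition used :: "nat set \<Rightarrow> (nat \<Rightarrow> nat) \<Rightarrow> (nat \<Rightarrow> nat set) \<Rightarrow> nat set" where
  "used I c L = (\<Union>i\<in>I. insert (c i) (L i))"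

lemma packing_copy:
  assumes P: "packing V E d {1..k} c L"
  shows "subgraph_copy (star_forest_V k d) (star_forest_E k d) V E"
proof -
  have "\<forall>i\<in>{1..k}. \<exists>h. bij_betw h {1..d i} (L i)"
    using P unfolding packing_def by (metis ex_bij_betw_nat_finite_1)
  then obtain h where h: "\<And>i. i \<in> {1..k} \<Longrightarrow> bij_betw (h i) {1..d i} (L i)"
    by metis
  define f where "f = (\<lambda>(i::nat,j::nat). if j = 0 then c i else h i j)"
  have fin: "f (i,j) \<in> insert (c i) (L i)" if "i \<in> {1..k}" "j \<le> d i" for i j
    using h[OF that(1)] that unfolding f_def bij_betw_def by auto
  have "inj_on f (star_forest_V k d)"
  proof (rule inj_onI)
    fix a b assume a: "a \<in> star_forest_V k d" and b: "b \<in> star_forest_V k d" and ab: "f a = f b"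
    obtain i j where aij: "a = (i,j)" "i \<in> {1..k}" "j \<le> d i" using a unfolding star_forest_V_def by auto
    obtain i' j' where bij: "b = (i',j')" "i' \<in> {1..k}" "j' \<le> d i'" using b unfolding star_forest_V_def by auto
    show "a = b"
    proof (cases "i = i'")
      case False
      then have "insert (c i) (L i) \<inter> insert (c i') (L i') = {}" using P aij bij unfolding packing_def by blast
      then show ?thesis using fin[OF aij(2,3)] fin[OF bij(2,3)] ab aij bij by auto
    next
      case True
      have ci: "c i \<notin> L i" using P aij unfolding packing_def by blast
      have hi: "bij_betw (h i) {1..d i} (L i)" using h aij by auto
      have hj: "\<And>j. j \<in> {1..d i} \<Longrightarrow> h i j \<in> L i" using hi unfolding bij_betw_def by auto
      have inj: "inj_on (h i) {1..d i}" using hi unfolding bij_betw_def by auto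
      show ?thesis
      proof (cases "j = 0"; cases "j' = 0")
        assume "j = 0" "j' = 0" then show ?thesis using aij bij True by simp
      next
        assume "j = 0" "j' \<noteq> 0"
        then have "f a = c i" "f b = h i j'" using aij(1) bij(1) True by (simp_all add: f_def)
        moreover have "h i j' \<in> L i" using hj \<open>j' \<noteq> 0\<close> bij True by auto
        ultimately show ?thesis using ab ci by auto
      next
        assume "j \<noteq> 0" "j' = 0"
        then have "f b = c i" "f a = h i j" using aij(1) bij(1) True by (simp_all add: f_def)
        moreover have "h i j \<in> L i" using hj \<open>j \<noteq> 0\<close> aij by auto
        ultimately show ?thesis using ab ci by auto
      next
        assume "j \<noteq> 0" "j' \<noteq> 0"
        then have "f a = h i j" "f b = h i j'" using aij(1) bij(1) True by (simp_all add: f_def)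
        then have "h i j = h i j'" using ab by simp
        moreover have "j \<in> {1..d i}" "j' \<in> {1..d i}" using \<open>j \<noteq> 0\<close> \<open>j' \<noteq> 0\<close> aij(3) bij(3) True by auto
        ultimately have "j = j'" using inj_onD[OF inj] by blast
        then show ?thesis using aij bij True by auto
      qed
    qed
  qed
  moreover have "f ` star_forest_V k d \<subseteq> V"
  proof
    fix y assume "y \<in> f ` star_forest_V k d"
    then obtain i j where "y = f (i,j)" "i \<in> {1..k}" "j \<le> d i" unfolding star_forest_V_def by auto
    moreover have "c i \<in> V" "L i \<subseteq> V" using P \<open>i \<in> {1..k}\<close> unfolding packing_def by auto
    ultimately show "y \<in> V" using fin[of i j] by auto
  qed
  moreover have "\<forall>e\<in>star_forest_E k d. f ` e \<in> E"
  proof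
    fix e assume "e \<in> star_forest_E k d"
    then obtain i j where e: "e = {(i,0),(i,j)}" "i \<in> {1..k}" "1 \<le> j" "j \<le> d i" unfolding star_forest_E_def by auto
    then have "h i j \<in> L i" using h[OF e(2)] unfolding bij_betw_def by auto
    moreover have "\<forall>x\<in>L i. {c i, x} \<in> E" using P e(2) unfolding packing_def by auto
    moreover have "f ` e = {c i, h i j}" using e by (simp add: f_def)
    ultimately show "f ` e \<in> E" by auto
  qed
  ultimately show ?thesis unfolding subgraph_copy_def by blast
qed



lemma nbr_sub: "simple_graph V E \<Longrightarrow> nbr E v \<subseteq> V - {v}"
  unfolding simple_graph_def nbr_def by (auto simp: card_2_iff)

lemma used_sub: "packing V E d I c L \<Longrightarrow> used I c L \<subseteq> V"
  unfolding packing_def used_def by auto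

lemma used_card: "finite I \<Longrightarrow> packing V E d I c L \<Longrightarrow> card (used I c L) \<le> (\<Sum>i\<in>I. d i + 1)"
proof -
  assume f: "finite I" and P: "packing V E d I c L"
  have "card (used I c L) \<le> (\<Sum>i\<in>I. card (insert (c i) (L i)))"
    unfolding used_def using f by (rule card_UN_le)
  also have "\<dots> \<le> (\<Sum>i\<in>I. d i + 1)"
  proof (rule sum_mono)
    fix i assume "i \<in> I"
    then have "finite (L i)" "card (L i) = d i" using P unfolding packing_def by auto
    then show "card (insert (c i) (L i)) \<le> d i + 1" by (simp add: card_insert_if)
  qed
  finally show ?thesis .
qed

lemma packing_empty: "packing V E d {} c L"
  unfolding packing_def by auto

lemma packing_insert:
  assumes P: "packing V E d I c L" and a: "a \<notin> I"
    and v: "v \<in> V" "La \<subseteq> V" "v \<notin> La" "finite La" "card La = d a" "\<forall>x\<in>La. {v,x} \<in> E"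
    and disj: "insert v La \<inter> used I c L = {}"
  shows "packing V E d (insert a I) (c(a := v)) (L(a := La))"
    and "used (insert a I) (c(a := v)) (L(a := La)) = insert v La \<union> used I c L"
proof -
  have eq: "\<And>i. i \<in> I \<Longrightarrow> (c(a := v)) i = c i \<and> (L(a := La)) i = L i" using a by auto
  show "packing V E d (insert a I) (c(a := v)) (L(a := La))"
    unfolding packing_def
  proof (rule conjI)
    show "\<forall>i\<in>insert a I. (c(a := v)) i \<in> V \<and> (L(a := La)) i \<subseteq> V \<and> (c(a := v)) i \<notin> (L(a := La)) i \<and>
      finite ((L(a := La)) i) \<and> card ((L(a := La)) i) = d i \<and> (\<forall>x\<in>(L(a := La)) i. {(c(a := v)) i, x} \<in> E)"
    proof
      fix i assume "i \<in> insert a I"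
      then show "(c(a := v)) i \<in> V \<and> (L(a := La)) i \<subseteq> V \<and> (c(a := v)) i \<notin> (L(a := La)) i \<and>
      finite ((L(a := La)) i) \<and> card ((L(a := La)) i) = d i \<and> (\<forall>x\<in>(L(a := La)) i. {(c(a := v)) i, x} \<in> E)"
        using P v a unfolding packing_def by (cases "i = a") auto
    qed
  next
    show "\<forall>i\<in>insert a I. \<forall>i'\<in>insert a I. i \<noteq> i' \<longrightarrow> insert ((c(a := v)) i) ((L(a := La)) i) \<inter> insert ((c(a := v)) i') ((L(a := La)) i') = {}"
    proof (intro ballI impI)
    fix i i' assume i: "i \<in> insert a I" and i': "i' \<in> insert a I" and ne: "i \<noteq> i'"
    show "insert ((c(a := v)) i) ((L(a := La)) i) \<inter> insert ((c(a := v)) i') ((L(a := La)) i') = {}"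
    proof (cases "i = a")
      case True
      then have "i' \<in> I" using i' ne by auto
      then have "insert (c i') (L i') \<subseteq> used I c L" unfolding used_def by auto
      then show ?thesis using True disj eq[OF \<open>i' \<in> I\<close>] ne by auto
    next
      case False
      then have iI: "i \<in> I" using i by auto
      show ?thesis
      proof (cases "i' = a")
        case True
        have "insert (c i) (L i) \<subseteq> used I c L" using iI unfolding used_def by auto
        then show ?thesis using True disj eq[OF iI] ne by auto
      next
        case False
        then have "i' \<in> I" using i' by auto
        then show ?thesis using P iI ne eq[OF iI] eq[OF \<open>i' \<in> I\<close>] unfolding packing_def by auto
      qed
    qed
    qed
  qed
  show "used (insert a I) (c(a := v)) (L(a := La)) = insert v La \<union> used I c L"
    unfolding used_def using eq by auto
qed

lemma packing_extend:
  assumes sg: "simple_graph V E" "finite V"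
  shows "finite A \<Longrightarrow> A \<inter> I = {} \<Longrightarrow> packing V E d I c L \<Longrightarrow> inj_on g A \<Longrightarrow> g ` A \<subseteq> X \<Longrightarrow> X \<subseteq> V
    \<Longrightarrow> used I c L \<inter> X = {} \<Longrightarrow>
   (\<forall>a\<in>A. card (used I c L) + (\<Sum>i\<in>A. d i) + card X \<le> card (nbr E (g a))) \<Longrightarrow>
   \<exists>c' L'. packing V E d (I \<union> A) c' L' \<and> used (I \<union> A) c' L' \<inter> X \<subseteq> g ` A
      \<and> card (used (I \<union> A) c' L' \<union> X) \<le> card (used I c L) + (\<Sum>i\<in>A. d i) + card X"
proof (induction A rule: finite_induct)
  case empty
  have "card (used I c L \<union> X) \<le> card (used I c L) + card X" by (rule card_Un_le)
  then show ?case using empty by auto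
next
  case (insert a A)
  have fX: "finite X" using insert.prems(5) sg(2) finite_subset by blast
  have "\<forall>b\<in>A. card (used I c L) + (\<Sum>i\<in>A. d i) + card X \<le> card (nbr E (g b))"
    using insert.prems(7) insert.hyps by auto
  then obtain c' L' where P': "packing V E d (I \<union> A) c' L'" and X': "used (I \<union> A) c' L' \<inter> X \<subseteq> g ` A"
    and C': "card (used (I \<union> A) c' L' \<union> X) \<le> card (used I c L) + (\<Sum>i\<in>A. d i) + card X"
    using insert.IH insert.prems by auto
  let ?U = "used (I \<union> A) c' L'"
  have fU: "finite (?U \<union> X)" using used_sub[OF P'] fX sg(2) finite_subset by blast
  have ga: "g a \<in> X" using insert.prems by auto
  have gaA: "g a \<notin> g ` A" using insert.prems(3) insert.hyps by auto
  have gaU: "g a \<notin> ?U" using X' ga gaA by auto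
  have "card (nbr E (g a)) \<ge> card (used I c L) + (\<Sum>i\<in>A. d i) + d a + card X"
    using insert.prems(7) insert.hyps by auto
  then have "card (nbr E (g a) - (?U \<union> X)) \<ge> d a"
  proof -
    have "card (nbr E (g a)) - card (?U \<union> X) \<le> card (nbr E (g a) - (?U \<union> X))"
      by (rule diff_card_le_card_Diff[OF fU])
    then show ?thesis using C' \<open>card (nbr E (g a)) \<ge> _\<close> by linarith
  qed
  then obtain La where La: "La \<subseteq> nbr E (g a) - (?U \<union> X)" "card La = d a" "finite La"
    by (meson obtain_subset_with_card_n)
  have nb: "nbr E (g a) \<subseteq> V - {g a}" by (rule nbr_sub[OF sg(1)])
  have aIA: "a \<notin> I \<union> A" using insert by auto
  have gaV: "g a \<in> V" using ga insert.prems(5) by auto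
  note PI = packing_insert[OF P' aIA gaV, of La]
  have c1: "La \<subseteq> V" "g a \<notin> La" "\<forall>x\<in>La. {g a, x} \<in> E" using La nb unfolding nbr_def by auto
  have c2: "insert (g a) La \<inter> ?U = {}" using La gaU by auto
  have eqI: "I \<union> insert a A = insert a (I \<union> A)" by auto
  show ?case
  proof (intro exI conjI)
    show "packing V E d (I \<union> insert a A) (c'(a := g a)) (L'(a := La))"
      unfolding eqI using PI(1)[OF c1(1,2) La(3,2) c1(3) c2] .
    have U2: "used (I \<union> insert a A) (c'(a := g a)) (L'(a := La)) = insert (g a) La \<union> ?U"
      unfolding eqI using PI(2)[OF c1(1,2) La(3,2) c1(3) c2] .
    show "used (I \<union> insert a A) (c'(a := g a)) (L'(a := La)) \<inter> X \<subseteq> g ` insert a A"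
      unfolding U2 using X' La by auto
    have "card (insert (g a) La \<union> ?U \<union> X) = card (La \<union> (?U \<union> X))"
      using ga by (metis Un_assoc Un_commute Un_insert_left Un_insert_right insert_absorb UnI2)
    also have "\<dots> \<le> card La + card (?U \<union> X)" by (rule card_Un_le)
    finally show "card (used (I \<union> insert a A) (c'(a := g a)) (L'(a := La)) \<union> X)
        \<le> card (used I c L) + sum d (insert a A) + card X"
      unfolding U2 using C' La insert.hyps by simp
  qed
qed



lemma first_fail: "a \<le> b \<Longrightarrow> P (a::nat) \<Longrightarrow> \<not> P (b::nat) \<Longrightarrow> \<exists>m. a < m \<and> m \<le> b \<and> P (m - 1) \<and> \<not> P m"
proof (induction b)
  case 0 then show ?case by auto
next
  case (Suc b)
  show ?case
  proof (cases "P b")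
    case True
    show ?thesis
    proof (cases "a = Suc b")
      case True then show ?thesis using Suc.prems by auto
    next
      case False then show ?thesis using Suc.prems \<open>P b\<close> by (intro exI[of _ "Suc b"]) auto
    qed
  next
    case False
    have "a \<noteq> Suc b" using Suc.prems by auto
    then have "a \<le> b" using Suc.prems by auto
    then obtain m where "a < m" "m \<le> b" "P (m - 1)" "\<not> P m" using Suc.IH Suc.prems False by blast
    then show ?thesis by (intro exI[of _ m]) auto
  qed
qed

lemma struct:
  fixes V :: "nat set" and E and k :: nat and d :: "nat \<Rightarrow> nat"
  assumes sg: "simple_graph V E" and fV: "finite V"
    and nF: "\<not> subgraph_copy (star_forest_V k d) (star_forest_E k d) V E"
  defines "T \<equiv> (\<Sum>i\<in>{1..k}. d i + 1)"
  shows "\<exists>B U j. B \<subseteq> V \<and> card B < k \<and> (\<forall>v\<in>V - B. card (nbr E v) < T) \<and> card B < j \<and> j \<le> k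
     \<and> U \<subseteq> V - B \<and> card U \<le> T \<and> (j = card B + 1 \<longrightarrow> U = {})
     \<and> (\<forall>v\<in>V - B - U. card (nbr E v \<inter> (V - B - U)) < d j)"
proof -
  define B where "B = {v\<in>V. T \<le> card (nbr E v)}"
  have BV: "B \<subseteq> V" unfolding B_def by auto
  have fB: "finite B" using BV fV finite_subset by blast
  have Tsum: "T = (\<Sum>i\<in>{1..k}. d i) + k" unfolding T_def sum.distrib by simp
  have cB: "card B < k"
  proof (rule ccontr)
    assume "\<not> card B < k"
    then obtain B' where B': "B' \<subseteq> B" "card B' = k" "finite B'" by (meson not_less obtain_subset_with_card_n)
    obtain g where g: "bij_betw g {1..k} B'" using ex_bij_betw_nat_finite_1[OF B'(3)] B'(2) by auto
    have "\<exists>c' L'. packing V E d ({} \<union> {1..k}) c' L' \<and> used ({} \<union> {1..k}) c' L' \<inter> B' \<subseteq> g ` {1..k}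
      \<and> card (used ({} \<union> {1..k}) c' L' \<union> B') \<le> card (used {} c L) + (\<Sum>i\<in>{1..k}. d i) + card B'"
    proof (rule packing_extend[OF sg fV])
      show "inj_on g {1..k}" "g ` {1..k} \<subseteq> B'" using g unfolding bij_betw_def by auto
      show "B' \<subseteq> V" using B' BV by auto
      show "used {} c L \<inter> B' = {}" unfolding used_def by auto
      show "packing V E d {} c L" by (rule packing_empty)
      show "\<forall>a\<in>{1..k}. card (used {} c L) + (\<Sum>i\<in>{1..k}. d i) + card B' \<le> card (nbr E (g a))"
      proof
        fix a assume "a \<in> {1..k}"
        then have "g a \<in> B" using g B' unfolding bij_betw_def by auto
        then show "card (used {} c L) + (\<Sum>i\<in>{1..k}. d i) + card B' \<le> card (nbr E (g a))"
          unfolding B_def used_def using Tsum B'(2) by auto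
      qed
    qed auto
    then show False using nF packing_copy by auto
  qed
  define s where "s = card B"
  define P where "P m \<longleftrightarrow> (\<exists>c L. packing V E d {s+1..m} c L \<and> used {s+1..m} c L \<inter> B = {})" for m
  have Ps: "P s" unfolding P_def using packing_empty by (auto simp: used_def)
  have Pk: "\<not> P k"
  proof
    assume "P k"
    then obtain c L where P0: "packing V E d {s+1..k} c L" and U0: "used {s+1..k} c L \<inter> B = {}"
      unfolding P_def by auto
    obtain g where g: "bij_betw g {1..s} B" using ex_bij_betw_nat_finite_1[OF fB] s_def by auto
    have cu: "card (used {s+1..k} c L) \<le> (\<Sum>i\<in>{s+1..k}. d i + 1)" by (rule used_card[OF _ P0]) auto
    have split: "{1..k} = {1..s} \<union> {s+1..k}" using cB s_def by auto
    have "T = (\<Sum>i\<in>{1..s}. d i + 1) + (\<Sum>i\<in>{s+1..k}. d i + 1)"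
      unfolding T_def split by (rule sum.union_disjoint) auto
    also have "(\<Sum>i\<in>{1..s}. d i + 1) = (\<Sum>i\<in>{1..s}. d i) + s" unfolding sum.distrib by simp
    finally have Teq: "T = (\<Sum>i\<in>{1..s}. d i) + s + (\<Sum>i\<in>{s+1..k}. d i + 1)" .
    have "\<exists>c' L'. packing V E d ({s+1..k} \<union> {1..s}) c' L' \<and> used ({s+1..k} \<union> {1..s}) c' L' \<inter> B \<subseteq> g ` {1..s}
      \<and> card (used ({s+1..k} \<union> {1..s}) c' L' \<union> B) \<le> card (used {s+1..k} c L) + (\<Sum>i\<in>{1..s}. d i) + card B"
    proof (rule packing_extend[OF sg fV])
      show "inj_on g {1..s}" "g ` {1..s} \<subseteq> B" using g unfolding bij_betw_def by auto
      show "\<forall>a\<in>{1..s}. card (used {s+1..k} c L) + (\<Sum>i\<in>{1..s}. d i) + card B \<le> card (nbr E (g a))"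
      proof
        fix a assume "a \<in> {1..s}"
        then have "g a \<in> B" using g unfolding bij_betw_def by auto
        then have "T \<le> card (nbr E (g a))" unfolding B_def by auto
        then show "card (used {s+1..k} c L) + (\<Sum>i\<in>{1..s}. d i) + card B \<le> card (nbr E (g a))"
          using Teq cu s_def by linarith
      qed
    qed (use P0 U0 BV in auto)
    moreover have "{s+1..k} \<union> {1..s} = {1..k}" using split by auto
    ultimately show False using nF packing_copy by metis
  qed
  obtain j where j: "s < j" "j \<le> k" "P (j - 1)" "\<not> P j" using first_fail[of s k P, OF _ Ps Pk] cB s_def by auto
  obtain c L where P0: "packing V E d {s+1..j-1} c L" and U0: "used {s+1..j-1} c L \<inter> B = {}"
    using j(3) unfolding P_def by auto
  define U where "U = used {s+1..j-1} c L"
  have UV: "U \<subseteq> V - B" using used_sub[OF P0] U0 unfolding U_def by auto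
  have "card U \<le> (\<Sum>i\<in>{s+1..j-1}. d i + 1)" unfolding U_def by (rule used_card[OF _ P0]) auto
  also have "\<dots> \<le> T" unfolding T_def by (rule sum_mono2) (use j in auto)
  finally have cU: "card U \<le> T" .
  have U1: "j = s + 1 \<longrightarrow> U = {}" unfolding U_def used_def by auto
  have deg: "\<forall>v\<in>V - B - U. card (nbr E v \<inter> (V - B - U)) < d j"
  proof (rule ballI, rule ccontr)
    fix v assume v: "v \<in> V - B - U" and "\<not> card (nbr E v \<inter> (V - B - U)) < d j"
    then obtain La where La: "La \<subseteq> nbr E v \<inter> (V - B - U)" "card La = d j" "finite La"
      by (meson not_less obtain_subset_with_card_n)
    have nb: "nbr E v \<subseteq> V - {v}" by (rule nbr_sub[OF sg])
    have jI: "j \<notin> {s+1..j-1}" by auto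
    have vV: "v \<in> V" using v by auto
    have c1: "La \<subseteq> V" "v \<notin> La" "\<forall>x\<in>La. {v, x} \<in> E" using La nb unfolding nbr_def by auto
    have c2: "insert v La \<inter> used {s+1..j-1} c L = {}" using La v unfolding U_def by auto
    note PI = packing_insert[OF P0 jI vV c1(1,2) La(3,2) c1(3) c2]
    have eqj: "insert j {s+1..j-1} = {s+1..j}" using j by auto
    have "P j" unfolding P_def
      using PI La v U0 unfolding eqj by (intro exI[of _ "c(j := v)"] exI[of _ "L(j := La)"]) (auto simp: U_def)
    then show False using j by auto
  qed
  have "\<forall>v\<in>V - B. card (nbr E v) < T" unfolding B_def by auto
  then show ?thesis using BV cB j UV cU U1 deg unfolding s_def by blast
qed



definition clq :: "nat set set \<Rightarrow> nat set \<Rightarrow> bool" where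
  "clq E S \<longleftrightarrow> (\<forall>x\<in>S. \<forall>y\<in>S. x \<noteq> y \<longrightarrow> {x, y} \<in> E)"

lemma count_Kr_clq: "count_Kr r V E = card {S. S \<subseteq> V \<and> card S = r \<and> clq E S}"
  unfolding count_Kr_def clq_def by simp

lemma through_vertex:
  assumes fV: "finite V" and nb: "nbr E z \<subseteq> V" and r: "r \<ge> 1"
  shows "card {S. S \<subseteq> V \<and> card S = r \<and> clq E S \<and> z \<in> S} \<le> card (nbr E z) choose (r - 1)"
proof -
  let ?A = "{S. S \<subseteq> V \<and> card S = r \<and> clq E S \<and> z \<in> S}"
  have fn: "finite (nbr E z)" using nb fV finite_subset by blast
  have "card ?A \<le> card {A. A \<subseteq> nbr E z \<and> card A = r - 1}"
  proof (rule card_inj_on_le[where f = "\<lambda>S. S - {z}"])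
    show "inj_on (\<lambda>S. S - {z}) ?A"
      by (rule inj_onI) (metis (mono_tags, lifting) insert_Diff mem_Collect_eq)
    show "(\<lambda>S. S - {z}) ` ?A \<subseteq> {A. A \<subseteq> nbr E z \<and> card A = r - 1}"
    proof
      fix X assume "X \<in> (\<lambda>S. S - {z}) ` ?A"
      then obtain S where S: "S \<subseteq> V" "card S = r" "clq E S" "z \<in> S" "X = S - {z}" by auto
      have fS: "finite S" using S fV finite_subset by blast
      have "S - {z} \<subseteq> nbr E z" using S(3,4) unfolding clq_def nbr_def by auto
      moreover have "card (S - {z}) = r - 1" using S(2,4) fS by (simp add: card_Diff_singleton)
      ultimately have "X \<subseteq> nbr E z" "card X = r - 1" using S(5) by auto
      then show "X \<in> {A. A \<subseteq> nbr E z \<and> card A = r - 1}" by auto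
    qed
    show "finite {A. A \<subseteq> nbr E z \<and> card A = r - 1}" using fn by simp
  qed
  also have "\<dots> = card (nbr E z) choose (r - 1)" by (rule n_subsets[OF fn])
  finally show ?thesis .
qed

lemma through_vertex_W:
  assumes fV: "finite V" and BV: "B \<subseteq> V" and W: "W \<subseteq> V" and BW: "B \<inter> W = {}" and v: "v \<in> W"
    and t: "t \<ge> 1"
  shows "card {S \<in> {S. S \<subseteq> B \<union> W \<and> card S = r \<and> clq E S \<and> card (S \<inter> W) = t}. v \<in> S}
     \<le> (card B choose (r - t)) * (card (nbr E v \<inter> W) choose (t - 1))"
proof -
  let ?A = "{S \<in> {S. S \<subseteq> B \<union> W \<and> card S = r \<and> clq E S \<and> card (S \<inter> W) = t}. v \<in> S}"
  let ?P = "{A. A \<subseteq> B \<and> card A = r - t}"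
  let ?Q = "{A. A \<subseteq> nbr E v \<inter> W \<and> card A = t - 1}"
  have fB: "finite B" using BV fV finite_subset by blast
  have fW: "finite W" using W fV finite_subset by blast
  have fQ0: "finite (nbr E v \<inter> W)" using fW by simp
  have "card ?A \<le> card (?P \<times> ?Q)"
  proof (rule card_inj_on_le[where f = "\<lambda>S. (S \<inter> B, S \<inter> W - {v})"])
    show "inj_on (\<lambda>S. (S \<inter> B, S \<inter> W - {v})) ?A"
    proof (rule inj_onI)
      fix S S' assume S: "S \<in> ?A" and S': "S' \<in> ?A" and eq: "(S \<inter> B, S \<inter> W - {v}) = (S' \<inter> B, S' \<inter> W - {v})"
      have sub: "S \<subseteq> B \<union> W" "v \<in> S" "S' \<subseteq> B \<union> W" "v \<in> S'" using S S' by auto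
      have e1: "S \<inter> B = S' \<inter> B" "S \<inter> W - {v} = S' \<inter> W - {v}" using eq by auto
      have "S = (S \<inter> B) \<union> insert v (S \<inter> W - {v})" using sub v by blast
      also have "\<dots> = (S' \<inter> B) \<union> insert v (S' \<inter> W - {v})" using e1 by simp
      also have "\<dots> = S'" using sub v by blast
      finally show "S = S'" .
    qed
    show "(\<lambda>S. (S \<inter> B, S \<inter> W - {v})) ` ?A \<subseteq> ?P \<times> ?Q"
    proof
      fix X assume "X \<in> (\<lambda>S. (S \<inter> B, S \<inter> W - {v})) ` ?A"
      then obtain S where S: "S \<subseteq> B \<union> W" "card S = r" "clq E S" "card (S \<inter> W) = t" "v \<in> S"
        and X: "X = (S \<inter> B, S \<inter> W - {v})" by auto
      have fS: "finite S" using S fB fW finite_subset by blast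
      have "S = (S \<inter> B) \<union> (S \<inter> W)" using S by auto
      then have "card S = card (S \<inter> B) + card (S \<inter> W)"
        using card_Un_disjoint[of "S \<inter> B" "S \<inter> W"] fS BW by auto
      then have c1: "card (S \<inter> B) = r - t" using S by auto
      have c2: "card (S \<inter> W - {v}) = t - 1" using S fS v by (simp add: card_Diff_singleton)
      have c3: "S \<inter> W - {v} \<subseteq> nbr E v \<inter> W" using S unfolding clq_def nbr_def by auto
      show "X \<in> ?P \<times> ?Q" using X c1 c2 c3 by auto
    qed
    have "finite ?P" using fB by simp
    moreover have "?Q \<subseteq> Pow (nbr E v \<inter> W)" by blast
    then have "finite ?Q" using fQ0 finite_Pow_iff finite_subset by metis
    ultimately show "finite (?P \<times> ?Q)" by blast
  qed
  also have "\<dots> = card ?P * card ?Q" by (rule card_cartesian_product)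
  also have "\<dots> = (card B choose (r - t)) * (card (nbr E v \<inter> W) choose (t - 1))"
    using n_subsets[OF fB] n_subsets[OF fQ0] by simp
  finally show ?thesis .
qed



lemma binom_ratio: "dd \<ge> 1 \<Longrightarrow> t \<ge> 1 \<Longrightarrow> real ((dd - 1) choose (t - 1)) / real t = real (dd choose t) / real dd"
proof -
  assume "dd \<ge> 1" "t \<ge> 1"
  define a where "a = dd - 1"
  define b where "b = t - 1"
  have a: "dd = Suc a" and b: "t = Suc b" using \<open>dd \<ge> 1\<close> \<open>t \<ge> 1\<close> unfolding a_def b_def by auto
  have "Suc a * (a choose b) = (Suc a choose Suc b) * Suc b" by (rule Suc_times_binomial_eq)
  then have "real (Suc a) * real (a choose b) = real (Suc a choose Suc b) * real (Suc b)" by (metis of_nat_mult)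
  then show ?thesis unfolding a b by (simp add: field_simps del: binomial_Suc_Suc)
qed

lemma vand_tail: "r \<ge> 1 \<Longrightarrow> (\<Sum>t\<in>{1..r}. (s choose (r - t)) * (dd choose t)) + (s choose r) = (dd + s) choose r"
proof -
  assume r: "r \<ge> 1"
  have "(\<Sum>t\<le>r. (dd choose t) * (s choose (r - t))) = (dd + s) choose r" by (rule vandermonde)
  moreover have "{..r} = insert 0 {1..r}" by auto
  moreover have "(\<Sum>t\<in>insert 0 {1..r}. (dd choose t) * (s choose (r - t))) = (s choose r) + (\<Sum>t\<in>{1..r}. (dd choose t) * (s choose (r - t)))"
    by (subst sum.insert) auto
  ultimately show ?thesis by (simp add: mult.commute)
qed

lemma count_bound:
  assumes sg: "simple_graph V E" and fV: "finite V" and BV: "B \<subseteq> V" and UV: "U \<subseteq> V - B"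
    and degU: "\<forall>z\<in>U. card (nbr E z) < T"
    and degW: "\<forall>v\<in>V - B - U. card (nbr E v \<inter> (V - B - U)) < dd" and dd: "dd \<ge> 1" and r: "r \<ge> 1"
  shows "real (count_Kr r V E) \<le> real (card B choose r) + real (card U) * real (T choose (r - 1))
      + (real ((dd + card B) choose r) - real (card B choose r)) / real dd * real (card (V - B - U))"
proof -
  define W where "W = V - B - U"
  define s where "s = card B"
  define Cl where "Cl = {S. S \<subseteq> V \<and> card S = r \<and> clq E S}"
  define ClB where "ClB = {S\<in>Cl. S \<subseteq> B}"
  define ClU where "ClU = (\<Union>z\<in>U. {S. S \<subseteq> V \<and> card S = r \<and> clq E S \<and> z \<in> S})"
  define Clt where "Clt t = {S. S \<subseteq> B \<union> W \<and> card S = r \<and> clq E S \<and> card (S \<inter> W) = t}" for t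
  have fB: "finite B" using BV fV finite_subset by blast
  have fU: "finite U" using UV fV finite_subset by blast
  have WV: "W \<subseteq> V" and fW: "finite W" unfolding W_def using fV by auto
  have BW: "B \<inter> W = {}" unfolding W_def by auto
  have finPV: "finite {S. S \<subseteq> V}" using fV by simp
  have fCl: "finite Cl" unfolding Cl_def by (rule finite_subset[OF _ finPV]) auto
  have fClB: "finite ClB" unfolding ClB_def using fCl by simp
  have fClU: "finite ClU" unfolding ClU_def by (rule finite_subset[OF _ finPV]) auto
  have fClt: "finite (Clt t)" for t unfolding Clt_def W_def by (rule finite_subset[OF _ finPV]) (use BV in auto)
  have cover: "Cl \<subseteq> ClB \<union> ClU \<union> (\<Union>t\<in>{1..r}. Clt t)"
  proof
    fix S assume S: "S \<in> Cl"
    then have SV: "S \<subseteq> V" and cS: "card S = r" and cq: "clq E S" unfolding Cl_def by auto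
    have fS: "finite S" using SV fV finite_subset by blast
    show "S \<in> ClB \<union> ClU \<union> (\<Union>t\<in>{1..r}. Clt t)"
    proof (cases "S \<inter> U = {}")
      case False
      then obtain z where "z \<in> S" "z \<in> U" by auto
      then show ?thesis using SV cS cq unfolding ClU_def by auto
    next
      case True
      then have SBW: "S \<subseteq> B \<union> W" using SV unfolding W_def by auto
      show ?thesis
      proof (cases "card (S \<inter> W) = 0")
        case True
        then have "S \<inter> W = {}" using fS by auto
        then have "S \<subseteq> B" using SBW by auto
        then show ?thesis using S unfolding ClB_def by auto
      next
        case False
        have "card (S \<inter> W) \<le> r" using cS fS card_mono[of S "S \<inter> W"] by auto
        then have "card (S \<inter> W) \<in> {1..r}" using False by auto
        moreover have "S \<in> Clt (card (S \<inter> W))" unfolding Clt_def using SBW cS cq by auto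
        ultimately show ?thesis by blast
      qed
    qed
  qed
  have "card Cl \<le> card (ClB \<union> ClU \<union> (\<Union>t\<in>{1..r}. Clt t))"
    by (rule card_mono[OF _ cover]) (use fClB fClU fClt in auto)
  also have "\<dots> \<le> card ClB + card ClU + card (\<Union>t\<in>{1..r}. Clt t)"
    by (meson add_le_mono card_Un_le le_refl order_trans)
  also have "card (\<Union>t\<in>{1..r}. Clt t) \<le> (\<Sum>t\<in>{1..r}. card (Clt t))" by (rule card_UN_le) auto
  finally have c0: "card Cl \<le> card ClB + card ClU + (\<Sum>t\<in>{1..r}. card (Clt t))" by simp
  have cB: "card ClB \<le> s choose r"
  proof -
    have "card ClB \<le> card {A. A \<subseteq> B \<and> card A = r}"
      by (rule card_mono) (use fB in \<open>auto simp: ClB_def Cl_def\<close>)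
    then show ?thesis using n_subsets[OF fB] s_def by simp
  qed
  have cU: "card ClU \<le> card U * (T choose (r - 1))"
  proof -
    have "card ClU \<le> (\<Sum>z\<in>U. card {S. S \<subseteq> V \<and> card S = r \<and> clq E S \<and> z \<in> S})"
      unfolding ClU_def by (rule card_UN_le[OF fU])
    also have "\<dots> \<le> of_nat (card U) * (T choose (r - 1))"
    proof (rule sum_bounded_above)
      fix z assume z: "z \<in> U"
      have nb: "nbr E z \<subseteq> V" using nbr_sub[OF sg] by auto
      have "card {S. S \<subseteq> V \<and> card S = r \<and> clq E S \<and> z \<in> S} \<le> card (nbr E z) choose (r - 1)"
        by (rule through_vertex[OF fV nb r])
      also have "\<dots> \<le> T choose (r - 1)" using degU z by (intro binomial_right_mono) auto
      finally show "card {S. S \<subseteq> V \<and> card S = r \<and> clq E S \<and> z \<in> S} \<le> T choose (r - 1)" .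
    qed
    finally show ?thesis by simp
  qed
  have ct: "real (card (Clt t)) \<le> real (card W) * real (s choose (r - t)) * real (dd choose t) / real dd"
    if t: "t \<in> {1..r}" for t
  proof -
    have mc: "(\<Sum>v\<in>W. card {S\<in>Clt t. v \<in> S}) = t * card (Clt t)"
    proof (rule sum_multicount[OF fW fClt])
      show "\<forall>S\<in>Clt t. card {v \<in> W. v \<in> S} = t"
      proof
        fix S assume "S \<in> Clt t"
        moreover have "{v \<in> W. v \<in> S} = S \<inter> W" by auto
        ultimately show "card {v \<in> W. v \<in> S} = t" unfolding Clt_def by auto
      qed
    qed
    have "(\<Sum>v\<in>W. card {S\<in>Clt t. v \<in> S}) \<le> of_nat (card W) * ((s choose (r - t)) * ((dd - 1) choose (t - 1)))"
    proof (rule sum_bounded_above)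
      fix v assume v: "v \<in> W"
      have h1: "card {S\<in>Clt t. v \<in> S} \<le> (card B choose (r - t)) * (card (nbr E v \<inter> W) choose (t - 1))"
        unfolding Clt_def by (rule through_vertex_W[OF fV BV WV BW v]) (use t in auto)
      have "card (nbr E v \<inter> W) < dd" using degW v unfolding W_def by auto
      then have "card (nbr E v \<inter> W) \<le> dd - 1" by linarith
      then have h2: "(card B choose (r - t)) * (card (nbr E v \<inter> W) choose (t - 1)) \<le> (s choose (r - t)) * ((dd - 1) choose (t - 1))"
        unfolding s_def by (intro mult_le_mono2 binomial_right_mono)
      show "card {S\<in>Clt t. v \<in> S} \<le> (s choose (r - t)) * ((dd - 1) choose (t - 1))" using h1 h2 by (rule order_trans)
    qed
    then have "t * card (Clt t) \<le> card W * ((s choose (r - t)) * ((dd - 1) choose (t - 1)))" using mc by simp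
    then have "real t * real (card (Clt t)) \<le> real (card W) * real (s choose (r - t)) * real ((dd - 1) choose (t - 1))"
      by (metis of_nat_le_iff of_nat_mult mult.assoc)
    then have "real (card (Clt t)) \<le> real (card W) * real (s choose (r - t)) * (real ((dd - 1) choose (t - 1)) / real t)"
      using t by (simp add: field_simps)
    also have "real ((dd - 1) choose (t - 1)) / real t = real (dd choose t) / real dd"
      using binom_ratio[OF dd] t by auto
    finally show ?thesis by simp
  qed
  have "real (\<Sum>t\<in>{1..r}. card (Clt t)) \<le> (\<Sum>t\<in>{1..r}. real (card W) * real (s choose (r - t)) * real (dd choose t) / real dd)"
    unfolding of_nat_sum by (rule sum_mono) (rule ct)
  also have "\<dots> = real (card W) / real dd * real (\<Sum>t\<in>{1..r}. (s choose (r - t)) * (dd choose t))"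
    unfolding of_nat_sum sum_distrib_left by (rule sum.cong) (auto simp: field_simps)
  also have "real (\<Sum>t\<in>{1..r}. (s choose (r - t)) * (dd choose t)) = real ((dd + s) choose r) - real (s choose r)"
    using vand_tail[OF r, of s dd] by (metis add_diff_cancel_right' of_nat_add)
  finally have cW: "real (\<Sum>t\<in>{1..r}. card (Clt t)) \<le> (real ((dd + s) choose r) - real (s choose r)) / real dd * real (card W)"
    by (simp add: field_simps)
  have "real (count_Kr r V E) = real (card Cl)" unfolding count_Kr_clq Cl_def by simp
  also have "\<dots> \<le> real (card ClB) + real (card ClU) + real (\<Sum>t\<in>{1..r}. card (Clt t))"
    using c0 by (metis of_nat_add of_nat_le_iff)
  also have "\<dots> \<le> real (s choose r) + real (card U) * real (T choose (r - 1)) + (real ((dd + s) choose r) - real (s choose r)) / real dd * real (card W)"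
    using cB cU cW by (metis add_mono of_nat_le_iff of_nat_mult)
  finally show ?thesis unfolding s_def W_def .
qed



lemma bound_ge:
  assumes "k \<ge> 2" "i \<in> {1..k}"
  shows "(real ((d i + i - 1) choose r) - real ((i - 1) choose r)) * of_int \<lceil>(real n - real i + 1) / real (d i)\<rceil>
           + real ((i - 1) choose r) \<le> cor62_bound k d r n"
    and "(real (d i) - 1) / (real r - real i + 1) * (real n - real i + 1) \<le> cor62_bound k d r n"
  unfolding cor62_bound_def using assms by (auto intro!: Max_ge)

lemma ceil_term:
  assumes G: "G \<ge> 0" and dd: "dd > 0" and c: "c \<ge> 0"
  shows "G / real dd * x \<le> G * of_int \<lceil>x / real dd\<rceil> + c"
proof -
  have "G / real dd * x = G * (x / real dd)" by simp
  also have "\<dots> \<le> G * of_int \<lceil>x / real dd\<rceil>" using G by (intro mult_left_mono) auto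
  finally show ?thesis using c by linarith
qed

lemma h_step_mono:
  assumes r: "r \<ge> 1"
  shows "int ((dd + m) choose r) - int (m choose r) \<le> int ((dd + Suc m) choose r) - int (Suc m choose r)"
proof -
  obtain r' where r': "r = Suc r'" using r by (cases r) auto
  have "m choose r' \<le> (dd + m) choose r'" by (rule binomial_right_mono) simp
  moreover have "(dd + Suc m) choose r = ((dd + m) choose r') + ((dd + m) choose r)" unfolding r' by simp
  moreover have "Suc m choose r = (m choose r') + (m choose r)" unfolding r' by simp
  ultimately show ?thesis by simp
qed

lemma h_step_strict:
  assumes r: "r \<ge> 2" and pos: "m choose r < (dd + m) choose r"
  shows "int ((dd + m) choose r) - int (m choose r) < int ((dd + Suc m) choose r) - int (Suc m choose r)"
proof -
  obtain r' where r': "r = Suc r'" using r by (cases r) auto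
  have rle: "r \<le> dd + m" using pos by (metis binomial_eq_0_iff not_less not_less0)
  have strict: "m choose r' < (dd + m) choose r'"
  proof (cases "r' \<le> m")
    case False
    then have "m choose r' = 0" by simp
    moreover have "0 < (dd + m) choose r'" using rle r' by simp
    ultimately show ?thesis by linarith
  next
    case True
    obtain r'' where r'': "r' = Suc r''" using r r' by (cases r') auto
    have e1: "Suc m choose r' = (m choose r'') + (m choose r')" unfolding r'' by simp
    have e2: "0 < m choose r''" using True r'' by simp
    have e3: "Suc m choose r' \<le> (dd + m) choose r'"
    proof (cases "dd = 0")
      case True
      then have "m choose r < m choose r" using pos by simp
      then show ?thesis by simp
    next
      case False
      then show ?thesis by (intro binomial_right_mono) simp
    qed
    show ?thesis using e1 e2 e3 by linarith
  qed
  moreover have "(dd + Suc m) choose r = ((dd + m) choose r') + ((dd + m) choose r)" unfolding r' by simp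
  moreover have "Suc m choose r = (m choose r') + (m choose r)" unfolding r' by simp
  ultimately show ?thesis by simp
qed

lemma h_strict:
  assumes r: "r \<ge> 2" and pos: "s choose r < (dd + s) choose r" and sm: "s < m"
  shows "int ((dd + s) choose r) - int (s choose r) + 1 \<le> int ((dd + m) choose r) - int (m choose r)"
proof -
  define h where "h x = int ((dd + x) choose r) - int (x choose r)" for x
  have "h s < h (Suc s)" unfolding h_def by (rule h_step_strict[OF r pos])
  moreover have "h (Suc s) \<le> h m"
    by (rule lift_Suc_mono_le[of h]) (use h_step_mono r sm in \<open>auto simp: h_def\<close>)
  ultimately show ?thesis unfolding h_def by simp
qed



lemma graph_bound:
  fixes k r n :: nat and d :: "nat \<Rightarrow> nat" and E
  assumes k2: "k \<ge> 2" and dge: "\<forall>i\<in>{1..k}. d i \<ge> 2" and r2: "r \<ge> 2"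
    and sg: "simple_graph {0..<n} E"
    and nF: "\<not> subgraph_copy (star_forest_V k d) (star_forest_E k d) {0..<n} E"
  defines "T \<equiv> (\<Sum>i\<in>{1..k}. d i + 1)"
  defines "K0 \<equiv> 2 ^ k + T * (T choose (r - 1))"
  assumes nN: "k + 2 ^ (T + k) * k + K0 * T + K0 * r \<le> n"
  shows "real (count_Kr r {0..<n} E) \<le> cor62_bound k d r n"
proof -
  let ?V = "{0..<n}"
  obtain B U j where BV: "B \<subseteq> ?V" and cB: "card B < k" and degB: "\<forall>v\<in>?V - B. card (nbr E v) < T"
    and jB: "card B < j" and jk: "j \<le> k" and UV: "U \<subseteq> ?V - B" and cU: "card U \<le> T"
    and U1: "j = card B + 1 \<longrightarrow> U = {}" and degW: "\<forall>v\<in>?V - B - U. card (nbr E v \<inter> (?V - B - U)) < d j"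
    using struct[OF sg finite_atLeastLessThan nF] unfolding T_def by blast
  define s where "s = card B"
  define dd where "dd = d j"
  have j1: "j \<in> {1..k}" using jB jk by auto
  have dd2: "dd \<ge> 2" using dge j1 unfolding dd_def by auto
  have ddTn: "dd \<le> T" unfolding dd_def T_def
    using member_le_sum[where i=j and f="\<lambda>i. d i + 1" and A="{1..k}"] j1 by auto
  have degU: "\<forall>z\<in>U. card (nbr E z) < T" using degB UV by auto
  have cb: "real (count_Kr r ?V E) \<le> real (s choose r) + real (card U) * real (T choose (r - 1))
      + (real ((dd + s) choose r) - real (s choose r)) / real dd * real (card (?V - B - U))"
    unfolding s_def dd_def
    by (rule count_bound[OF sg finite_atLeastLessThan BV UV degU degW]) (use dd2 r2 dd_def in auto)
  define g where "g = real ((dd + s) choose r) - real (s choose r)"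
  have g0: "g \<ge> 0" unfolding g_def using binomial_right_mono[of s "dd + s" r] by simp
  have sn: "s \<le> n" using BV card_mono[OF _ BV] unfolding s_def by auto
  show ?thesis
  proof (cases "j = s + 1")
    case True
    then have "U = {}" using U1 s_def by auto
    then have cW: "card (?V - B - U) = n - s" using BV card_Diff_subset[OF _ BV] unfolding s_def
      by (simp add: finite_subset)
    have e1: "d j + j - 1 = dd + s" "j - 1 = s" using True unfolding dd_def by auto
    have e2: "real (n - s) = real n - real j + 1" using True sn by simp
    have "real (count_Kr r ?V E) \<le> real (s choose r) + g / real dd * (real n - real j + 1)"
      using cb \<open>U = {}\<close> cW e2 unfolding g_def by simp
    also have "\<dots> \<le> g * of_int \<lceil>(real n - real j + 1) / real dd\<rceil> + real (s choose r)"
    proof -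
      have "g / real dd * (real n - real j + 1) \<le> g * of_int \<lceil>(real n - real j + 1) / real dd\<rceil> + 0"
        using ceil_term[OF g0, of dd 0 "real n - real j + 1"] dd2 by linarith
      then show ?thesis by linarith
    qed
    also have "\<dots> \<le> cor62_bound k d r n"
      using bound_ge(1)[OF k2 j1, where r=r and n=n and d=d] e1 unfolding g_def dd_def by simp
    finally show ?thesis .
  next
    case False
    then have sj: "s < j - 1" using jB s_def by auto
    have c1: "real (s choose r) \<le> 2 ^ k"
    proof -
      have "s choose r \<le> 2 ^ s" by (rule binomial_le_pow2)
      also have "(2::nat) ^ s \<le> 2 ^ k" using cB s_def by (intro power_increasing) auto
      finally show ?thesis by (metis of_nat_le_iff of_nat_numeral of_nat_power)
    qed
    have c2: "real (card U) * real (T choose (r - 1)) \<le> real T * real (T choose (r - 1))"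
      using cU by (intro mult_right_mono) auto
    have cWn: "card (?V - B - U) \<le> n" using card_mono[of ?V "?V - B - U"] by auto
    have c3: "g / real dd * real (card (?V - B - U)) \<le> g / real dd * real n"
      using g0 dd2 cWn by (intro mult_left_mono) auto
    have main: "real (count_Kr r ?V E) \<le> real K0 + g / real dd * real n"
    proof -
      have K0eq: "real K0 = 2 ^ k + real T * real (T choose (r - 1))" unfolding K0_def by simp
      show ?thesis using cb c1 c2 c3 K0eq unfolding g_def by linarith
    qed
    show ?thesis
    proof (cases "s choose r < (dd + s) choose r")
      case True
      define G where "G = real ((dd + (j - 1)) choose r) - real ((j - 1) choose r)"
      have Gg: "g + 1 \<le> G"
        using h_strict[OF r2 True sj] unfolding g_def G_def by linarith
      have gB: "g \<le> 2 ^ (T + k)"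
      proof -
        have "(dd + s) choose r \<le> 2 ^ (dd + s)" by (rule binomial_le_pow2)
        also have "(2::nat) ^ (dd + s) \<le> 2 ^ (T + k)"
        proof (intro power_increasing)
          show "dd + s \<le> T + k" using ddTn cB s_def by auto
        qed auto
        finally have "real ((dd + s) choose r) \<le> 2 ^ (T + k)" by (metis of_nat_le_iff of_nat_numeral of_nat_power)
        then show ?thesis unfolding g_def by (smt (verit) of_nat_0_le_iff)
      qed
      define x where "x = real n - real j + 1"
      have x: "x = real n - real (j - 1)" "real (j - 1) \<le> real k" "real (j - 1) \<le> real n"
        unfolding x_def using j1 jk nN by auto
      have x0: "x \<ge> 0" using x by simp
      have A: "(g + 1) * x \<le> G * x" using Gg x0 by (intro mult_right_mono) auto
      have B: "g * real (j - 1) \<le> 2 ^ (T + k) * real k" using gB x g0 by (intro mult_mono) auto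
      have ddT: "real dd \<le> real T" using ddTn by simp
      have C: "real K0 * real dd \<le> real K0 * real T" using ddT by (intro mult_left_mono) auto
      have nN': "real k + 2 ^ (T + k) * real k + real K0 * real T \<le> real n"
        using nN by (metis (mono_tags, lifting) le_add1 le_trans of_nat_add of_nat_le_iff of_nat_mult of_nat_numeral of_nat_power)
      have "g * real n + real K0 * real dd \<le> G * x"
      proof -
        have "(g + 1) * x = g * real n - g * real (j - 1) + real n - real (j - 1)" unfolding x(1) by (simp add: algebra_simps)
        then show ?thesis using A B C nN' x by linarith
      qed
      then have "(g * real n + real K0 * real dd) / real dd \<le> G * x / real dd" using dd2 by (intro divide_right_mono) auto
      then have D: "real K0 + g / real dd * real n \<le> G / real dd * x" using dd2 by (simp add: field_simps)
      have G0: "G \<ge> 0" using Gg g0 by linarith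
      have "G / real dd * x \<le> G * of_int \<lceil>x / real dd\<rceil> + real ((j - 1) choose r)"
        using ceil_term[OF G0, of dd "real ((j - 1) choose r)" x] dd2 by simp
      also have "\<dots> \<le> cor62_bound k d r n"
        using bound_ge(1)[OF k2 j1, where r=r and n=n and d=d] j1 unfolding G_def dd_def x_def
        by (simp add: add.commute)
      finally show ?thesis using main D by linarith
    next
      case False
      then have "g \<le> 0" unfolding g_def by simp
      then have "g = 0" using g0 by simp
      then have m0: "real (count_Kr r ?V E) \<le> real K0" using main by simp
      have "real K0 * real r \<le> real n" using nN by (metis le_add2 le_trans of_nat_le_iff of_nat_mult)
      then have "real K0 \<le> real n / real r" using r2 by (simp add: field_simps)
      also have "\<dots> \<le> (real (d 1) - 1) / (real r - real 1 + 1) * (real n - real 1 + 1)"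
      proof -
        have "d 1 \<ge> 2" using dge k2 by auto
        then have "1 \<le> real (d 1) - 1" by simp
        then have "real n / real r \<le> (real (d 1) - 1) * (real n / real r)" using mult_right_mono[OF \<open>1 \<le> real (d 1) - 1\<close>, of "real n / real r"] by simp
        then show ?thesis by (simp add: field_simps)
      qed
      also have "\<dots> \<le> cor62_bound k d r n" using bound_ge(2)[OF k2, where i=1 and r=r and n=n and d=d] k2 by simp
      finally show ?thesis using m0 by linarith
    qed
  qed
qed



lemma count_le_choose: "finite V \<Longrightarrow> count_Kr r V E \<le> card V choose r"
proof -
  assume fV: "finite V"
  have "count_Kr r V E \<le> card {S. S \<subseteq> V \<and> card S = r}"
    unfolding count_Kr_def by (rule card_mono) (use fV in auto)
  then show ?thesis using n_subsets[OF fV] by simp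
qed

theorem corollary6p2:
  fixes k r :: nat and d :: "nat \<Rightarrow> nat"
  assumes "k \<ge> 2"
    and "\<And>i j. 1 \<le> i \<Longrightarrow> i \<le> j \<Longrightarrow> j \<le> k \<Longrightarrow> d j \<le> d i"
    and "d k \<ge> 2"
    and "r \<le> d 1 + k - 2"
  shows "\<exists>N. \<forall>n\<ge>N. real (ex_Kr n r (star_forest_V k d) (star_forest_E k d)) \<le> cor62_bound k d r n"
proof -
  have dge: "\<forall>i\<in>{1..k}. d i \<ge> 2"
  proof
    fix i assume "i \<in> {1..k}"
    then have "d k \<le> d i" using assms(2)[of i k] by auto
    then show "d i \<ge> 2" using assms(3) by simp
  qed
  define T where "T = (\<Sum>i\<in>{1..k}. d i + 1)"
  define K0 where "K0 = 2 ^ k + T * (T choose (r - 1))"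
  define N where "N = k + 2 ^ (T + k) * k + K0 * T + K0 * r"
  show ?thesis
  proof (intro exI[of _ N] allI impI)
    fix n assume nN: "N \<le> n"
    let ?V = "{0..<n}"
    let ?S = "{count_Kr r ?V E | E. simple_graph ?V E \<and> \<not> subgraph_copy (star_forest_V k d) (star_forest_E k d) ?V E}"
    have d1: "d 1 \<ge> 2" using dge assms(1) by auto
    have key: "real (count_Kr r ?V E) \<le> cor62_bound k d r n"
      if sg: "simple_graph ?V E" and nF: "\<not> subgraph_copy (star_forest_V k d) (star_forest_E k d) ?V E" for E
    proof -
      have cle: "count_Kr r ?V E \<le> n choose r" using count_le_choose[of ?V r E] by simp
      have b1: "(real ((d 1 + 1 - 1) choose r) - real ((1 - 1) choose r)) * of_int \<lceil>(real n - real 1 + 1) / real (d 1)\<rceil>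
           + real ((1 - 1) choose r) \<le> cor62_bound k d r n"
        by (rule bound_ge(1)) (use assms(1) in auto)
      show ?thesis
      proof (cases "r \<le> 1")
        case True
        show ?thesis
        proof (cases "r = 0")
          case True
          then show ?thesis using cle b1 by simp
        next
          case False
          then have r1: "r = 1" using \<open>r \<le> 1\<close> by simp
          have "real (d 1) / real (d 1) * real n \<le> real (d 1) * of_int \<lceil>real n / real (d 1)\<rceil> + 0"
            by (rule ceil_term) (use d1 in auto)
          then have "real n \<le> real (d 1) * of_int \<lceil>real n / real (d 1)\<rceil>" using d1 by simp
          then show ?thesis using cle b1 r1 by simp
        qed
      next
        case False
        then have r2: "r \<ge> 2" by simp
        show ?thesis
          by (rule graph_bound[OF assms(1) dge r2 sg nF]) (use nN in \<open>simp add: N_def K0_def T_def\<close>)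
      qed
    qed
    have fin: "finite ?S"
    proof (rule finite_subset)
      show "?S \<subseteq> (\<lambda>E. count_Kr r ?V E) ` Pow (Pow ?V)"
        unfolding simple_graph_def by auto
    qed simp
    have "{} \<in> {E. simple_graph ?V E \<and> \<not> subgraph_copy (star_forest_V k d) (star_forest_E k d) ?V E}"
    proof -
      have "{(1,0),(1,1)} \<in> star_forest_E k d" unfolding star_forest_E_def using assms(1) d1 by force
      then have "\<not> subgraph_copy (star_forest_V k d) (star_forest_E k d) ?V {}"
        unfolding subgraph_copy_def by auto
      then show ?thesis unfolding simple_graph_def by auto
    qed
    then have ne: "?S \<noteq> {}" by blast
    have "Max ?S \<in> ?S" by (rule Max_in[OF fin ne])
    then obtain E where "Max ?S = count_Kr r ?V E" and "simple_graph ?V E"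
      and "\<not> subgraph_copy (star_forest_V k d) (star_forest_E k d) ?V E" by auto
    then show "real (ex_Kr n r (star_forest_V k d) (star_forest_E k d)) \<le> cor62_bound k d r n"
      unfolding ex_Kr_def using key by simp
  qed
qed


end
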